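(* Let $\mathbb{G}$ be a homogeneous group of homogeneous dimension $Q\geq 3$ and $|\cdot|$ a homogeneous quasi-norm. Let $2\leq p<Q$, $-\infty<\alpha<\frac{Q-p}{p}$, let $b\in\mathbb{R}$ be arbitrary and set $\delta_1=Q-p-\alpha p-\frac{Q+pb}{p}$, $\delta_2=Q-p-\alpha p-\frac{bp}{p-1}$. Then for all $f\in C_0^\infty(\mathbb{G}\setminus\{0\})$, $$\int_{\mathbb{G}}\frac{|\mathcal{R}f(x)|^p}{|x|^{\alpha p}}dx-\left(\frac{Q-p-\alpha p}{p}\right)^p\int_{\mathbb{G}}\frac{|f(x)|^p}{|x|^{(\alpha+1)p}}dx\geq C_p\frac{\left(\int_{\mathbb{G}}|f(x)|^p|x|^{\delta_1}dx\right)^p}{\left(\int_{\mathbb{G}}|f(x)|^p|x|^{\delta_2}dx\right)^{p-1}},$$ where $C_p=c_p\left|\frac{Q(p-1)-pb}{p^2}\right|^p$ and $c_p=\min_{0<t\leq 1/2}\left((1-t)^p-t^p+pt^{p-1}\right)$.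
   Context: A homogeneous group is a connected simply connected Lie group $\mathbb{G}$ whose Lie algebra carries a family of dilations $D_\lambda=\mathrm{Exp}(A\ln\lambda)$, $\lambda>0$, with $A$ diagonalisable with positive eigenvalues, each $D_\lambda$ being a Lie algebra automorphism; these induce dilations $x\mapsto\lambda x$ on $\mathbb{G}$. The homogeneous dimension is $Q=\mathrm{Tr}\,A$. A homogeneous quasi-norm is a continuous nonnegative function $|\cdot|$, vanishing only at $0$, with $|x^{-1}|=|x|$ and $|\lambda x|=\lambda|x|$. Writing $x=ry$ with $r=|x|$ and $|y|=1$, the radial derivative is $\mathcal{R}f(x)=\frac{d}{dr}f(ry)$. Integrals are with respect to Haar measure. *)

theory Defs
  imports "HOL-Analysis.Analysis"
begin

definition dpart :: "'a::euclidean_space \<Rightarrow> ('a \<Rightarrow> 'b::real_normed_vector) \<Rightarrow> 'a \<Rightarrow> 'b" where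
  "dpart v f x = vector_derivative (\<lambda>t. f (x + t *\<^sub>R v)) (at 0)"

fun iter_dpart :: "'a::euclidean_space list \<Rightarrow> ('a \<Rightarrow> 'b::real_normed_vector) \<Rightarrow> 'a \<Rightarrow> 'b" where
  "iter_dpart [] f = f"
| "iter_dpart (v # vs) f = dpart v (iter_dpart vs f)"

definition C_infinity_on :: "'a::euclidean_space set \<Rightarrow> ('a \<Rightarrow> 'b::real_normed_vector) \<Rightarrow> bool" where
  "C_infinity_on S f \<longleftrightarrow>
     (\<forall>vs. set vs \<subseteq> Basis \<longrightarrow>
        continuous_on S (iter_dpart vs f) \<and>
        (\<forall>x\<in>S. \<forall>v\<in>Basis. (\<lambda>t. iter_dpart vs f (x + t *\<^sub>R v)) differentiable (at 0)))"

(* Dilations in (exponential) coordinates adapted to the eigenbasis of A,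
   with weights \<nu> i = eigenvalues of A *)
definition dil :: "('n::finite \<Rightarrow> real) \<Rightarrow> real \<Rightarrow> real^'n \<Rightarrow> real^'n" where
  "dil \<nu> l x = (\<chi> i. l powr (\<nu> i) * x $ i)"

(* homogeneous dimension Q = Tr A *)
definition hom_dim :: "('n::finite \<Rightarrow> real) \<Rightarrow> real" where
  "hom_dim \<nu> = (\<Sum>i\<in>UNIV. \<nu> i)"

(* A homogeneous group, realised on R^N (exponential coordinates): a smooth
   group law with identity 0, positive dilation weights, dilations are group
   automorphisms, and Lebesgue measure is the (left) Haar measure. *)
definition homogeneous_group ::
  "(real^'n::finite \<Rightarrow> real^'n \<Rightarrow> real^'n) \<Rightarrow> (real^'n \<Rightarrow> real^'n) \<Rightarrow> ('n \<Rightarrow> real) \<Rightarrow> bool" where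
  "homogeneous_group gmul ginv \<nu> \<longleftrightarrow>
     (\<forall>x y z. gmul (gmul x y) z = gmul x (gmul y z)) \<and>
     (\<forall>x. gmul 0 x = x \<and> gmul x 0 = x) \<and>
     (\<forall>x. gmul (ginv x) x = 0 \<and> gmul x (ginv x) = 0) \<and>
     C_infinity_on UNIV (\<lambda>(x, y). gmul x y) \<and>
     C_infinity_on UNIV ginv \<and>
     (\<forall>i. \<nu> i > 0) \<and>
     (\<forall>l>0. \<forall>x y. dil \<nu> l (gmul x y) = gmul (dil \<nu> l x) (dil \<nu> l y)) \<and>
     (\<forall>y. distr lborel lborel (gmul y) = lborel)"

definition homogeneous_quasi_norm ::
  "(real^'n::finite \<Rightarrow> real^'n) \<Rightarrow> ('n \<Rightarrow> real) \<Rightarrow> (real^'n \<Rightarrow> real) \<Rightarrow> bool" where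
  "homogeneous_quasi_norm ginv \<nu> N \<longleftrightarrow>
     continuous_on UNIV N \<and>
     (\<forall>x. N x \<ge> 0 \<and> (N x = 0 \<longleftrightarrow> x = 0)) \<and>
     (\<forall>x. N (ginv x) = N x) \<and>
     (\<forall>l>0. \<forall>x. N (dil \<nu> l x) = l * N x)"

(* radial derivative: x = r y with r = |x|, |y| = 1, Rf(x) = d/dr f(r y) *)
definition radial_deriv ::
  "('n::finite \<Rightarrow> real) \<Rightarrow> (real^'n \<Rightarrow> real) \<Rightarrow> (real^'n \<Rightarrow> real) \<Rightarrow> real^'n \<Rightarrow> real" where
  "radial_deriv \<nu> N f x = deriv (\<lambda>r. f (dil \<nu> r (dil \<nu> (1 / N x) x))) (N x)"

definition C0_infinity_punctured :: "(real^'n::finite \<Rightarrow> real) set" where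
  "C0_infinity_punctured =
     {f. C_infinity_on (UNIV - {0}) f \<and>
         compact (closure {x. f x \<noteq> 0}) \<and> 0 \<notin> closure {x. f x \<noteq> 0}}"

definition c_const :: "real \<Rightarrow> real" where
  "c_const p = (INF t\<in>{0<..1/2}. (1 - t) powr p - t powr p + p * t powr (p - 1))"

end

theory Submission
  imports Defs
begin
definition dphi :: "real \<Rightarrow> real \<Rightarrow> real" where
  "dphi p y = p * (\<bar>y\<bar> powr (p - 1) * sgn y)"

lemma dphi_deriv:
  assumes p: "p > 1"
  shows "((\<lambda>y. \<bar>y\<bar> powr p) has_real_derivative dphi p y) (at y)"
proof (cases "y = 0")
  case True
  have "((\<lambda>h. (\<bar>h\<bar> powr p - \<bar>0\<bar> powr p) / h) \<longlongrightarrow> 0) (at 0)"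
  proof (rule tendsto_norm_zero_cancel, rule Lim_null_comparison)
    show "\<forall>\<^sub>F h in at 0. norm (norm ((\<bar>h\<bar> powr p - \<bar>0\<bar> powr p) / (h::real))) \<le> \<bar>h\<bar> powr (p - 1)"
      by (auto simp: eventually_at_filter powr_diff abs_divide)
    have "((\<lambda>h::real. \<bar>h\<bar> powr (p - 1)) \<longlongrightarrow> \<bar>0\<bar> powr (p - 1)) (at 0)"
      using p by (intro tendsto_intros tendsto_powr') auto
    then show "((\<lambda>h::real. \<bar>h\<bar> powr (p - 1)) \<longlongrightarrow> 0) (at 0)" by simp
  qed
  then show ?thesis using True by (simp add: DERIV_def dphi_def)
next
  case False
  show ?thesis
  proof (cases "y > 0")
    case True
    have "((\<lambda>y. y powr p) has_real_derivative p * y powr (p - 1)) (at y)"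
      using True by (auto intro!: derivative_eq_intros)
    then have "((\<lambda>y. \<bar>y\<bar> powr p) has_real_derivative p * y powr (p - 1)) (at y)"
      by (rule has_field_derivative_transform_within_open[where S="{0<..}"]) (use True in auto)
    then show ?thesis using True by (simp add: dphi_def)
  next
    case False
    with \<open>y \<noteq> 0\<close> have y: "y < 0" by auto
    have "((\<lambda>y. (-y) powr p) has_real_derivative p * (-y) powr (p - 1) * (-1)) (at y)"
      using y by (auto intro!: derivative_eq_intros)
    then have "((\<lambda>y. \<bar>y\<bar> powr p) has_real_derivative p * (-y) powr (p - 1) * (-1)) (at y)"
      by (rule has_field_derivative_transform_within_open[where S="{..<0}"]) (use y in auto)
    then show ?thesis using y by (simp add: dphi_def)
  qed
qed

lemma sgnpow_isCont:
  assumes q: "q > 0"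
  shows "isCont (\<lambda>y::real. \<bar>y\<bar> powr q * sgn y) x"
proof (cases "x = 0")
  case True
  have "((\<lambda>y::real. \<bar>y\<bar> powr q * sgn y) \<longlongrightarrow> 0) (at 0)"
  proof (rule tendsto_norm_zero_cancel, rule Lim_null_comparison)
    show "\<forall>\<^sub>F h in at 0. norm (norm (\<bar>h\<bar> powr q * sgn (h::real))) \<le> \<bar>h\<bar> powr q"
      by (auto simp: eventually_at_filter abs_mult sgn_real_def)
    have "((\<lambda>h::real. \<bar>h\<bar> powr q) \<longlongrightarrow> \<bar>0\<bar> powr q) (at 0)"
      using q by (intro tendsto_intros tendsto_powr') auto
    then show "((\<lambda>h::real. \<bar>h\<bar> powr q) \<longlongrightarrow> 0) (at 0)" by simp
  qed
  then show ?thesis using True by (simp add: isCont_def)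
next
  case False
  show ?thesis
  proof (cases "x > 0")
    case True
    have ev: "eventually (\<lambda>y. y > 0) (nhds x)"
      using eventually_nhds_in_open[of "{0<..}" x] True by simp
    have "isCont (\<lambda>y. y powr q) x" using True by (intro continuous_intros) auto
    moreover have e2: "eventually (\<lambda>y. \<bar>y\<bar> powr q * sgn y = y powr q) (nhds x)"
      using ev by eventually_elim auto
    ultimately show ?thesis by (simp add: isCont_cong[OF e2])
  next
    case False
    with \<open>x \<noteq> 0\<close> have x: "x < 0" by auto
    have ev: "eventually (\<lambda>y. y < 0) (nhds x)"
      using eventually_nhds_in_open[of "{..<0}" x] x by simp
    have "isCont (\<lambda>y. - ((-y) powr q)) x" using x by (intro continuous_intros) auto
    moreover have e2: "eventually (\<lambda>y. \<bar>y\<bar> powr q * sgn y = - ((-y) powr q)) (nhds x)"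
      using ev by eventually_elim auto
    ultimately show ?thesis by (simp add: isCont_cong[OF e2])
  qed
qed

lemma dphi_cont: "p > 1 \<Longrightarrow> continuous_on UNIV (dphi p)"
  unfolding dphi_def
  by (intro continuous_at_imp_continuous_on ballI continuous_intros sgnpow_isCont) auto

definition Gfun :: "real \<Rightarrow> real \<Rightarrow> real" where
  "Gfun p t = (1 - t) powr p - t powr p + p * t powr (p - 1)"

lemma powr_m1: "0 < (x::real) \<Longrightarrow> x powr a = x * x powr (a - 1)"
  by (simp add: powr_diff)

lemma c_const_Gfun: "c_const p = (INF t\<in>{0<..1/2}. Gfun p t)"
  by (simp add: c_const_def Gfun_def)

lemma Gfun_nonneg: assumes "p \<ge> 1" "0 < t" "t \<le> 1/2" shows "Gfun p t \<ge> 0"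
proof -
  have "t powr p \<le> (1 - t) powr p" using assms by (intro powr_mono2) auto
  then show ?thesis unfolding Gfun_def using assms by auto
qed

lemma c_le_Gfun: assumes "p \<ge> 1" "0 < t" "t \<le> 1/2" shows "c_const p \<le> Gfun p t"
  unfolding c_const_Gfun
  by (rule cINF_lower) (use assms Gfun_nonneg[OF assms(1)] in \<open>auto intro!: bdd_belowI2[where m=0]\<close>)

lemma c_nonneg: assumes "p \<ge> 1" shows "c_const p \<ge> 0"
  unfolding c_const_Gfun
  by (rule cINF_greatest) (use assms Gfun_nonneg[OF assms(1)] in auto)

lemma c_le_1: assumes p: "p \<ge> 2" shows "c_const p \<le> 1"
proof -
  have lim: "((\<lambda>t. Gfun p t) \<longlongrightarrow> (1 - 0) powr p - 0 powr p + p * 0 powr (p - 1)) (at_right 0)"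
    unfolding Gfun_def using p
    by (intro tendsto_intros tendsto_powr') (auto intro: eventually_mono[OF eventually_at_right_less])
  have ev: "eventually (\<lambda>t. c_const p \<le> Gfun p t) (at_right (0::real))"
    unfolding eventually_at_right_field by (rule exI[of _ "1/2"]) (use p in \<open>auto intro!: c_le_Gfun\<close>)
  have "c_const p \<le> (1 - 0) powr p - 0 powr p + p * 0 powr (p - 1)"
    by (rule tendsto_lowerbound[OF lim ev]) simp
  then show ?thesis by simp
qed

lemma Gfun_mono: assumes p: "p \<ge> 2" and t: "1/2 \<le> t" "t \<le> 1" shows "Gfun p (1/2) \<le> Gfun p t"
proof (rule DERIV_nonneg_imp_increasing_open[OF t(1)])
  fix x :: real assume x: "1/2 < x" "x < t"
  have d: "(Gfun p has_real_derivative
       (- p * (1 - x) powr (p - 1) - p * x powr (p - 1) + p * ((p - 1) * x powr (p - 2)))) (at x)"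
    unfolding Gfun_def[abs_def] using x t
    by (auto intro!: derivative_eq_intros simp: algebra_simps)
  have a: "(1 - x) powr (p - 1) \<le> (1 - x) * x powr (p - 2)"
  proof -
    have "(1 - x) powr (p - 1) = (1 - x) * (1 - x) powr (p - 2)"
      using x t powr_m1[of "1 - x" "p - 1"] by simp
    also have "\<dots> \<le> (1 - x) * x powr (p - 2)"
      using x t p by (intro mult_left_mono powr_mono2) auto
    finally show ?thesis .
  qed
  have b: "x powr (p - 1) = x * x powr (p - 2)"
    using x t powr_m1[of x "p - 1"] by simp
  have "(1 - x) powr (p - 1) + x powr (p - 1) \<le> x powr (p - 2)"
    using a b by (simp add: algebra_simps)
  also have "\<dots> \<le> (p - 1) * x powr (p - 2)" using p by (simp add: mult_le_cancel_right1)
  finally have "p * ((1 - x) powr (p - 1) + x powr (p - 1)) \<le> p * ((p - 1) * x powr (p - 2))"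
    by (rule mult_left_mono) (use p in auto)
  then have "0 \<le> - p * (1 - x) powr (p - 1) - p * x powr (p - 1) + p * ((p - 1) * x powr (p - 2))"
    by (simp add: algebra_simps)
  then show "\<exists>y. (Gfun p has_real_derivative y) (at x) \<and> 0 \<le> y" using d by blast
next
  show "continuous_on {1/2..t} (Gfun p)"
    unfolding Gfun_def using p t
    by (intro continuous_intros continuous_on_powr') auto
qed

lemma superadd_powr: fixes q a b :: real assumes q: "q \<ge> 1" and ab: "a \<ge> 0" "b \<ge> 0"
  shows "a powr q + b powr q \<le> (a + b) powr q"
proof (cases "a + b = 0")
  case True then have "a = 0" "b = 0" using ab by linarith+
  then show ?thesis by simp
next
  case False
  have ea: "a powr q = a * a powr (q - 1)"
    using ab q powr_m1[of a q] by (cases "a = 0") auto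
  have eb: "b powr q = b * b powr (q - 1)"
    using ab q powr_m1[of b q] by (cases "b = 0") auto
  have eab: "(a + b) powr q = a * (a + b) powr (q - 1) + b * (a + b) powr (q - 1)"
    using ab q False powr_m1[of "a + b" q] by (simp add: distrib_right)
  have "a * a powr (q - 1) \<le> a * (a + b) powr (q - 1)"
    using ab q by (intro mult_left_mono powr_mono2) auto
  moreover have "b * b powr (q - 1) \<le> b * (a + b) powr (q - 1)"
    using ab q by (intro mult_left_mono powr_mono2) auto
  ultimately show ?thesis using ea eb eab by linarith
qed

lemma H_pos: fixes p s :: real assumes p: "p \<ge> 2" and s: "s \<ge> 0"
  shows "1 + p * s + s powr p \<le> (1 + s) powr p"
proof -
  let ?k = "\<lambda>y. (1 + y) powr p - 1 - p * y - y powr p"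
  have "?k 0 \<le> ?k s"
  proof (rule DERIV_nonneg_imp_increasing_open[of 0 s ?k])
    show "0 \<le> s" using s by simp
  next
    fix x :: real assume x: "0 < x" "x < s"
    have d: "(?k has_real_derivative (p * (1 + x) powr (p - 1) - p - p * x powr (p - 1))) (at x)"
      using x by (auto intro!: derivative_eq_intros)
    have "1 powr (p - 1) + x powr (p - 1) \<le> (1 + x) powr (p - 1)"
      using p x by (intro superadd_powr) auto
    then have "p * (1 + x powr (p - 1)) \<le> p * (1 + x) powr (p - 1)"
      using p by (intro mult_left_mono) auto
    then have "0 \<le> p * (1 + x) powr (p - 1) - p - p * x powr (p - 1)"
      by (simp add: algebra_simps)
    then show "\<exists>y. (?k has_real_derivative y) (at x) \<and> 0 \<le> y" using d by blast
  next
    show "continuous_on {0..s} ?k" using p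
      by (intro continuous_intros continuous_on_powr') auto
  qed
  then show ?thesis by simp
qed

lemma H_mid: fixes p u :: real assumes p: "p \<ge> 2" and u: "0 \<le> u" "u \<le> 1"
  shows "1 - p * u + u powr p \<le> (1 - u) powr p"
proof -
  let ?k = "\<lambda>y. (1 - y) powr p - 1 + p * y - y powr p"
  have "?k 0 \<le> ?k u"
  proof (rule DERIV_nonneg_imp_increasing_open[of 0 u ?k])
    show "0 \<le> u" using u by simp
  next
    fix x :: real assume x: "0 < x" "x < u"
    have d: "(?k has_real_derivative (- p * (1 - x) powr (p - 1) + p - p * x powr (p - 1))) (at x)"
      using x u by (auto intro!: derivative_eq_intros)
    have "(1 - x) powr (p - 1) \<le> 1 - x" using x u p by (intro powr_le_one_le) auto
    moreover have "x powr (p - 1) \<le> x" using x u p by (intro powr_le_one_le) auto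
    ultimately have "p * ((1 - x) powr (p - 1) + x powr (p - 1)) \<le> p * 1"
      using p by (intro mult_left_mono) auto
    then have "0 \<le> - p * (1 - x) powr (p - 1) + p - p * x powr (p - 1)"
      by (simp add: algebra_simps)
    then show "\<exists>y. (?k has_real_derivative y) (at x) \<and> 0 \<le> y" using d by blast
  next
    show "continuous_on {0..u} ?k" using p u
      by (intro continuous_intros continuous_on_powr') auto
  qed
  then show ?thesis by simp
qed

lemma H_all: fixes p s :: real assumes p: "p \<ge> 2"
  shows "1 + p * s + c_const p * \<bar>s\<bar> powr p \<le> \<bar>1 + s\<bar> powr p"
proof -
  have c1: "c_const p \<le> 1" using c_le_1[OF p] .
  consider "s \<ge> 0" | "-1 \<le> s" "s < 0" | "s < -1" by linarith
  then show ?thesis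
  proof cases
    case 1
    have "c_const p * \<bar>s\<bar> powr p \<le> 1 * \<bar>s\<bar> powr p" using c1 by (intro mult_right_mono) auto
    then show ?thesis using H_pos[OF p 1] 1 by simp
  next
    case 2
    have "c_const p * \<bar>s\<bar> powr p \<le> 1 * \<bar>s\<bar> powr p" using c1 by (intro mult_right_mono) auto
    moreover have "1 - p * (-s) + (-s) powr p \<le> (1 - (-s)) powr p" using H_mid[OF p, of "-s"] 2 by simp
    moreover have "\<bar>s\<bar> = -s" "\<bar>1 + s\<bar> = 1 + s" using 2 by auto
    ultimately show ?thesis by (simp add: algebra_simps)
  next
    case 3
    define t where "t = -1 / s"
    have t: "0 < t" "t < 1" using 3 by (auto simp: t_def field_simps)
    have s_eq: "s = -1 / t" using 3 by (simp add: t_def)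
    have cG: "c_const p \<le> Gfun p t"
    proof (cases "t \<le> 1/2")
      case True then show ?thesis using c_le_Gfun[of p t] p t by simp
    next
      case False
      have "c_const p \<le> Gfun p (1/2)" using c_le_Gfun[of p "1/2"] p by simp
      also have "\<dots> \<le> Gfun p t" using Gfun_mono[OF p, of t] False t by simp
      finally show ?thesis .
    qed
    define T where "T = t powr p"
    define A where "A = (1 - t) powr p"
    have T: "T > 0" using t by (simp add: T_def)
    have tp1: "t powr (p - 1) = T / t" using powr_m1[of t p] t by (simp add: T_def)
    have c: "c_const p \<le> A - T + p * (T / t)" using cG by (simp add: Gfun_def A_def T_def tp1)
    have e1: "\<bar>1 + s\<bar> powr p = A / T"
    proof -
      have "\<bar>1 + s\<bar> = (1 - t) / t" using t by (simp add: s_eq field_simps abs_if)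
      then show ?thesis by (simp add: powr_divide A_def T_def)
    qed
    have e2: "\<bar>s\<bar> powr p = 1 / T"
    proof -
      have "\<bar>s\<bar> = 1 / t" using t by (simp add: s_eq abs_if)
      then show ?thesis by (simp add: powr_divide T_def)
    qed
    have h: "T * t + t * c_const p \<le> A * t + T * p" using c t by (simp add: field_simps)
    have "(1 + p * s + c_const p * (1 / T)) * T \<le> A"
      using mult_left_mono[OF h, of T] c t T by (simp add: s_eq field_simps)
    then have "1 + p * s + c_const p * (1 / T) \<le> A / T"
      using T by (simp add: le_divide_eq)
    then show ?thesis using e1 e2 by simp
  qed
qed

lemma SC: fixes p a b :: real assumes p: "p \<ge> 2"
  shows "\<bar>a\<bar> powr p + dphi p a * b + c_const p * \<bar>b\<bar> powr p \<le> \<bar>a + b\<bar> powr p"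
proof (cases "a = 0")
  case True
  have "c_const p * \<bar>b\<bar> powr p \<le> 1 * \<bar>b\<bar> powr p" using c_le_1[OF p] by (intro mult_right_mono) auto
  then show ?thesis using True by (simp add: dphi_def)
next
  case False
  define s where "s = b / a"
  have b: "b = a * s" using False by (simp add: s_def)
  have P: "\<bar>a\<bar> powr p = \<bar>a\<bar> * \<bar>a\<bar> powr (p - 1)" using powr_m1[of "\<bar>a\<bar>" p] False by simp
  have sg: "sgn a * a = \<bar>a\<bar>" by (simp add: abs_if sgn_if)
  have "dphi p a * b = p * s * (\<bar>a\<bar> powr (p - 1) * (sgn a * a))" by (simp add: dphi_def b algebra_simps)
  also have "\<dots> = p * \<bar>a\<bar> powr p * s" by (simp only: sg P) (simp add: algebra_simps)
  finally have "dphi p a * b = p * \<bar>a\<bar> powr p * s" .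
  moreover have "\<bar>a + b\<bar> powr p = \<bar>a\<bar> powr p * \<bar>1 + s\<bar> powr p"
  proof -
    have "a + b = a * (1 + s)" by (simp add: b algebra_simps)
    then show ?thesis by (simp add: abs_mult powr_mult)
  qed
  moreover have "\<bar>b\<bar> powr p = \<bar>a\<bar> powr p * \<bar>s\<bar> powr p"
    by (simp add: b abs_mult powr_mult)
  moreover have "\<bar>a\<bar> powr p * (1 + p * s + c_const p * \<bar>s\<bar> powr p) \<le> \<bar>a\<bar> powr p * \<bar>1 + s\<bar> powr p"
    using H_all[OF p, of s] by (intro mult_left_mono) auto
  ultimately show ?thesis by (simp add: algebra_simps)
qed

lemma axis_sum_eq: "(\<Sum>i\<in>UNIV. c i *\<^sub>R axis i (1::real)) = (\<chi> i. c i :: real^'n::finite)"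
  by (simp add: vec_eq_iff axis_def if_distrib cong: if_cong)

lemma dil_sum: "dil \<nu> l y = (\<Sum>i\<in>UNIV. (l powr \<nu> i * y $ i) *\<^sub>R axis i (1::real))"
  by (simp add: dil_def axis_sum_eq)

lemma dil_vderiv:
  assumes l: "l > 0"
  shows "((\<lambda>l. dil \<nu> l y) has_vector_derivative (\<chi> i. \<nu> i * l powr (\<nu> i - 1) * y $ i)) (at l)"
proof -
  have "((\<lambda>l. \<Sum>i\<in>UNIV. (l powr \<nu> i * y $ i) *\<^sub>R axis i (1::real)) has_vector_derivative
        (\<Sum>i\<in>UNIV. (\<nu> i * l powr (\<nu> i - 1) * y $ i) *\<^sub>R axis i (1::real))) (at l)"
    using l by (auto intro!: derivative_eq_intros has_vector_derivative_sum has_vector_derivative_scaleR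
)
  then show ?thesis by (simp add: dil_sum[abs_def] axis_sum_eq)
qed

lemma frechet_partials:
  fixes f :: "real^'n::finite \<Rightarrow> real" and d :: "'n \<Rightarrow> real^'n \<Rightarrow> real"
  assumes line: "\<And>x i. ((\<lambda>t. f (x + t *\<^sub>R axis i 1)) has_real_derivative d i x) (at 0)"
    and cont: "\<And>i. continuous_on UNIV (d i)"
  shows "(f has_derivative (\<lambda>h. \<Sum>i\<in>UNIV. h $ i * d i x)) (at x)"
  unfolding has_derivative_at_alt
proof (intro conjI allI impI)
  show "bounded_linear (\<lambda>h. \<Sum>i\<in>UNIV. h $ i * d i x)"
    by (intro bounded_linear_sum bounded_linear_mult_const bounded_linear_vec_nth)
  fix e :: real assume e: "e > 0"
  define \<epsilon> where "\<epsilon> = e / real CARD('n)"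
  have \<epsilon>: "\<epsilon> > 0" using e by (simp add: \<epsilon>_def)
  have "\<forall>\<^sub>F y in at x. \<forall>i. dist (d i y) (d i x) < \<epsilon>"
  proof (rule eventually_all_finite)
    fix i
    have "isCont (d i) x" using cont[of i] by (simp add: continuous_on_eq_continuous_at)
    then have "((d i) \<longlongrightarrow> d i x) (at x)" by (simp add: isCont_def)
    then show "\<forall>\<^sub>F y in at x. dist (d i y) (d i x) < \<epsilon>" using \<epsilon> by (rule tendstoD)
  qed
  then obtain \<delta> where \<delta>: "\<delta> > 0" and \<delta>d0: "\<And>y i. y \<noteq> x \<Longrightarrow> dist y x < \<delta> \<Longrightarrow> \<bar>d i y - d i x\<bar> < \<epsilon>"
    unfolding eventually_at by (auto simp: dist_real_def)
  have \<delta>d: "\<bar>d i y - d i x\<bar> < \<epsilon>" if "dist y x < \<delta>" for y i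
    using \<delta>d0[of y i] that \<epsilon> by (cases "y = x") auto
  show "\<exists>r>0. \<forall>y. norm (y - x) < r \<longrightarrow>
          norm (f y - f x - (\<Sum>i\<in>UNIV. (y - x) $ i * (d i x))) \<le> e * norm (y - x)"
  proof (intro exI[of _ \<delta>] conjI allI impI \<delta>)
    fix y assume y: "norm (y - x) < \<delta>"
    define h where "h = y - x"
    define v where "v I = (\<chi> i. if i \<in> I then h $ i else 0)" for I
    have nv: "norm (v I + t *\<^sub>R axis j 1) \<le> norm h" if "j \<notin> I" "\<bar>t\<bar> \<le> \<bar>h $ j\<bar>" for I j t
      by (rule norm_le_componentwise_cart) (use that in \<open>auto simp: v_def axis_def\<close>)
    have claim: "\<bar>f (x + v I) - f x - (\<Sum>i\<in>I. h $ i * d i x)\<bar> \<le> \<epsilon> * (\<Sum>i\<in>I. \<bar>h $ i\<bar>)" for I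
    proof (induction I rule: infinite_finite_induct)
      case (infinite A) then show ?case by simp
    next
      case empty
      have "v {} = 0" by (simp add: v_def vec_eq_iff)
      then show ?case by simp
    next
      case (insert j I)
      define z where "z = x + v I"
      define g where "g t = f (z + t *\<^sub>R axis j 1) - t * d j x" for t
      have vins: "v (insert j I) = v I + h $ j *\<^sub>R axis j 1"
        using insert by (auto simp: v_def vec_eq_iff axis_def)
      let ?S = "closed_segment 0 (h $ j)"
      have seg: "\<bar>t\<bar> \<le> \<bar>h $ j\<bar>" if "t \<in> ?S" for t
        using that by (auto simp: closed_segment_eq_real_ivl split: if_splits)
      have gd: "(g has_real_derivative (d j (z + t *\<^sub>R axis j 1) - d j x)) (at t within ?S)" for t
      proof -
        have "((\<lambda>s. f ((z + t *\<^sub>R axis j 1) + s *\<^sub>R axis j 1)) has_real_derivative d j (z + t *\<^sub>R axis j 1)) (at 0)"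
          by (rule line)
        then have "((\<lambda>s. f (z + (s + t) *\<^sub>R axis j 1)) has_real_derivative d j (z + t *\<^sub>R axis j 1)) (at 0)"
          by (simp add: algebra_simps scaleR_add_left)
        then have "((\<lambda>s. f (z + s *\<^sub>R axis j 1)) has_real_derivative d j (z + t *\<^sub>R axis j 1)) (at (0 + t))"
          by (subst DERIV_shift) simp
        then have "(g has_real_derivative (d j (z + t *\<^sub>R axis j 1) - d j x)) (at t)"
          unfolding g_def[abs_def] by (auto intro!: derivative_eq_intros)
        then show ?thesis by (rule has_field_derivative_at_within)
      qed
      have gb: "norm (d j (z + t *\<^sub>R axis j 1) - d j x) \<le> \<epsilon>" if "t \<in> ?S" for t
      proof -
        have "dist (z + t *\<^sub>R axis j 1) x < \<delta>"
          using nv[OF insert(2) seg[OF that]] y by (simp add: z_def dist_norm h_def)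
        then show ?thesis using \<delta>d[of "z + t *\<^sub>R axis j 1" j] by simp
      qed
      have "norm (g (h $ j) - g 0) \<le> \<epsilon> * norm (h $ j - 0)"
        by (rule field_differentiable_bound[OF convex_closed_segment gd gb]) auto
      then have A: "\<bar>f (z + h $ j *\<^sub>R axis j 1) - f z - h $ j * d j x\<bar> \<le> \<epsilon> * \<bar>h $ j\<bar>"
        by (simp add: g_def)
      have "f (x + v (insert j I)) - f x - (\<Sum>i\<in>insert j I. h $ i * d i x) =
            (f (z + h $ j *\<^sub>R axis j 1) - f z - h $ j * d j x) + (f (x + v I) - f x - (\<Sum>i\<in>I. h $ i * d i x))"
        using insert by (simp add: vins z_def algebra_simps)
      then have "\<bar>f (x + v (insert j I)) - f x - (\<Sum>i\<in>insert j I. h $ i * d i x)\<bar> \<le>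
            \<epsilon> * \<bar>h $ j\<bar> + \<epsilon> * (\<Sum>i\<in>I. \<bar>h $ i\<bar>)"
        using A insert.IH by linarith
      then show ?case using insert by (simp add: algebra_simps)
    qed
    have vU: "v UNIV = h" by (simp add: v_def vec_eq_iff)
    have "(\<Sum>i\<in>UNIV. \<bar>h $ i\<bar>) \<le> (\<Sum>i\<in>(UNIV::'n set). norm h)"
      by (intro sum_mono component_le_norm_cart)
    then have "\<epsilon> * (\<Sum>i\<in>UNIV. \<bar>h $ i\<bar>) \<le> \<epsilon> * (real CARD('n) * norm h)"
      using \<epsilon> by (intro mult_left_mono) auto
    also have "\<dots> = e * norm h" by (simp add: \<epsilon>_def)
    finally show "norm (f y - f x - (\<Sum>i\<in>UNIV. (y - x) $ i * (d i x))) \<le> e * norm (y - x)"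
      using claim[of UNIV] by (simp add: vU h_def)
  qed
qed

definition Eul :: "('n::finite \<Rightarrow> real) \<Rightarrow> ('n \<Rightarrow> real^'n \<Rightarrow> real) \<Rightarrow> real^'n \<Rightarrow> real" where
  "Eul \<nu> d x = (\<Sum>i\<in>UNIV. \<nu> i * x $ i * d i x)"

lemma C0_props:
  fixes f :: "real^'n::finite \<Rightarrow> real"
  assumes f: "f \<in> C0_infinity_punctured"
  defines "S \<equiv> closure {x. f x \<noteq> 0}"
  shows "compact S" "0 \<notin> S" "\<And>x. x \<notin> S \<Longrightarrow> f x = 0"
    "continuous_on UNIV f" "\<And>i. continuous_on UNIV (\<lambda>x. dpart (axis i 1) f x)"
    "\<And>x i. ((\<lambda>t. f (x + t *\<^sub>R axis i 1)) has_real_derivative dpart (axis i 1) f x) (at 0)"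
    "\<And>x i. x \<notin> S \<Longrightarrow> dpart (axis i 1) f x = 0"
proof -
  have C: "C_infinity_on (UNIV - {0}) f" and cS: "compact S" and S0: "0 \<notin> S"
    using f by (auto simp: C0_infinity_punctured_def S_def)
  show "compact S" "0 \<notin> S" by fact+
  show fz: "f x = 0" if "x \<notin> S" for x using that closure_subset[of "{x. f x \<noteq> 0}"] by (auto simp: S_def)
  have oS: "open (- S)" using cS by (simp add: compact_imp_closed open_Compl)
  have ax: "set [axis i (1::real)] \<subseteq> Basis" for i by simp
  have zero_line: "((\<lambda>t. f (x + t *\<^sub>R axis i 1)) has_real_derivative 0) (at 0)" if x: "x \<notin> S" for x i
  proof -
    have "((\<lambda>t::real. 0::real) has_real_derivative 0) (at 0)" by simp
    moreover have "open ((\<lambda>t::real. x + t *\<^sub>R axis i 1) -` (- S))"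
      by (rule open_vimage[OF oS]) (intro continuous_intros)
    ultimately show ?thesis
      by (rule has_field_derivative_transform_within_open) (use x fz in auto)
  qed
  show dz: "dpart (axis i 1) f x = 0" if "x \<notin> S" for x i
    unfolding dpart_def
    using zero_line[OF that, of i] by (simp add: has_real_derivative_iff_has_vector_derivative vector_derivative_at)
  show line: "((\<lambda>t. f (x + t *\<^sub>R axis i 1)) has_real_derivative dpart (axis i 1) f x) (at 0)" for x i
  proof (cases "x \<in> S")
    case False then show ?thesis using zero_line[OF False] dz[OF False] by simp
  next
    case True
    then have "x \<noteq> 0" using S0 by auto
    then have "(\<lambda>t. f (x + t *\<^sub>R axis i 1)) differentiable (at 0)"
      using C unfolding C_infinity_on_def by (metis ax iter_dpart.simps(1) empty_subsetI list.set(1) DiffI UNIV_I singletonD ax[of i] axis_in_Basis_iff set_subset_Cons list.set(2) insert_subset)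
    then show ?thesis
      unfolding dpart_def has_real_derivative_iff_has_vector_derivative by (simp add: vector_derivative_works[symmetric])
  qed
  have cont_comb: "continuous_on UNIV g" if g1: "continuous_on (UNIV - {0}) g" and g2: "\<And>x. x \<notin> S \<Longrightarrow> g x = 0" for g :: "real^'n \<Rightarrow> real"
  proof -
    have "continuous_on (- S) g" by (rule continuous_on_eq[OF continuous_on_const[of _ 0]]) (use g2 in auto)
    then have "continuous_on ((UNIV - {0}) \<union> (- S)) g"
      using g1 oS by (intro continuous_on_open_Un) auto
    moreover have "(UNIV - {0}) \<union> (- S) = UNIV" using S0 by auto
    ultimately show ?thesis by simp
  qed
  show "continuous_on UNIV f"
    using C fz unfolding C_infinity_on_def by (intro cont_comb) (metis empty_subsetI iter_dpart.simps(1) list.set(1))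
  show "continuous_on UNIV (\<lambda>x. dpart (axis i 1) f x)" for i
  proof (rule cont_comb)
    show "continuous_on (UNIV - {0}) (\<lambda>x. dpart (axis i 1) f x)"
      using C ax[of i] unfolding C_infinity_on_def by (metis iter_dpart.simps(1) iter_dpart.simps(2))
  qed (use dz in auto)
qed

lemma dil_dil: "dil \<nu> l (dil \<nu> m x) = dil \<nu> (l * m) x"
  by (simp add: dil_def vec_eq_iff powr_mult)

lemma dil_1[simp]: "dil \<nu> 1 x = x"
  by (simp add: dil_def vec_eq_iff)

lemma F1:
  fixes f :: "real^'n::finite \<Rightarrow> real" and d :: "'n \<Rightarrow> real^'n \<Rightarrow> real"
  assumes fd: "\<And>x. (f has_derivative (\<lambda>h. \<Sum>i\<in>UNIV. h $ i * d i x)) (at x)" and l: "l > 0"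
  shows "((\<lambda>l. f (dil \<nu> l y)) has_real_derivative Eul \<nu> d (dil \<nu> l y) / l) (at l)"
proof -
  define v where "v = (\<chi> i. \<nu> i * l powr (\<nu> i - 1) * y $ i)"
  have dv: "((\<lambda>l. dil \<nu> l y) has_derivative (\<lambda>h. h *\<^sub>R v)) (at l)"
    using dil_vderiv[OF l, of \<nu> y] by (simp add: has_vector_derivative_def v_def)
  have A: "((\<lambda>l. f (dil \<nu> l y)) has_derivative (\<lambda>h. \<Sum>i\<in>UNIV. (h *\<^sub>R v) $ i * d i (dil \<nu> l y))) (at l)"
    by (rule has_derivative_compose[OF dv fd])
  have E: "(\<lambda>h. \<Sum>i\<in>UNIV. (h *\<^sub>R v) $ i * d i (dil \<nu> l y)) = (\<lambda>h. (Eul \<nu> d (dil \<nu> l y) / l) * h)"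
  proof
    fix h :: real
    have "(h *\<^sub>R v) $ i * d i (dil \<nu> l y) = h * (\<nu> i * (dil \<nu> l y) $ i * d i (dil \<nu> l y) / l)" for i
      using l by (simp add: v_def dil_def powr_diff)
    then show "(\<Sum>i\<in>UNIV. (h *\<^sub>R v) $ i * d i (dil \<nu> l y)) = (Eul \<nu> d (dil \<nu> l y) / l) * h"
      by (simp add: Eul_def sum_distrib_left sum_divide_distrib mult.commute)
  qed
  show ?thesis unfolding has_field_derivative_def using A[unfolded E] .
qed

lemma radial_eq:
  fixes f :: "real^'n::finite \<Rightarrow> real" and d :: "'n \<Rightarrow> real^'n \<Rightarrow> real"
  assumes fd: "\<And>x. (f has_derivative (\<lambda>h. \<Sum>i\<in>UNIV. h $ i * d i x)) (at x)" and Nx: "N x > 0"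
  shows "radial_deriv \<nu> N f x = Eul \<nu> d x / N x"
proof -
  have e: "dil \<nu> (N x) (dil \<nu> (1 / N x) x) = x" using Nx by (simp add: dil_dil)
  show ?thesis
    unfolding radial_deriv_def
    by (rule DERIV_imp_deriv) (use F1[OF fd Nx, of \<nu> "dil \<nu> (1 / N x) x"] e in simp)
qed

lemma Basis_cart_real: "(Basis :: (real^'n::finite) set) = range (\<lambda>i. axis i 1)"
  by (auto simp: Basis_vec_def Basis_real_def)

lemma lborel_dil:
  fixes h :: "real^'n::finite \<Rightarrow> real"
  assumes l: "l > 0" and hm: "h \<in> borel_measurable borel"
  shows "(LINT x|lborel. h (dil \<nu> l x)) = l powr (- hom_dim \<nu>) * (LINT x|lborel. h x)"
proof -
  define c where "c j = l powr (\<Sum>k\<in>UNIV. \<nu> k * j $ k)" for j :: "real^'n"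
  define T where "T x = 0 + (\<Sum>j\<in>Basis. (c j * (x \<bullet> j)) *\<^sub>R j)" for x :: "real^'n"
  define K where "K = (\<Prod>j\<in>(Basis::(real^'n) set). \<bar>c j\<bar>)"
  have cax: "c (axis i 1) = l powr \<nu> i" for i
    by (simp add: c_def axis_def if_distrib cong: if_cong)
  have inj: "inj (\<lambda>i::'n. axis i (1::real))" by (auto simp: inj_def axis_eq_axis)
  have T: "T = dil \<nu> l"
  proof
    fix x
    have "T x = (\<Sum>i\<in>UNIV. (c (axis i 1) * (x \<bullet> axis i 1)) *\<^sub>R axis i (1::real))"
      unfolding T_def Basis_cart_real by (simp add: sum.reindex[OF inj])
    also have "\<dots> = dil \<nu> l x" by (simp add: cax inner_axis dil_sum)
    finally show "T x = dil \<nu> l x" .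
  qed
  have K: "K = l powr hom_dim \<nu>"
    unfolding K_def Basis_cart_real using l
    by (simp add: prod.reindex[OF inj] cax hom_dim_def powr_sum)
  have L: "lborel = density (distr lborel borel T) (\<lambda>_. K)"
    unfolding T_def K_def by (rule lborel_affine_euclidean) (use l in \<open>simp add: c_def\<close>)
  have Tm: "T \<in> borel_measurable lborel" by (simp add: T_def[abs_def])
  have "(LINT x|lborel. h x) = integral\<^sup>L (density (distr lborel borel T) (\<lambda>_. K)) h"
    using arg_cong[where f="\<lambda>M. integral\<^sup>L M h", OF L] .
  also have "\<dots> = integral\<^sup>L (distr lborel borel T) (\<lambda>x. K *\<^sub>R h x)"
    using hm l K by (subst integral_density) auto
  also have "\<dots> = (LINT x|lborel. K * h (T x))"
    using hm Tm by (subst integral_distr) auto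
  also have "\<dots> = K * (LINT x|lborel. h (dil \<nu> l x))" by (simp add: T)
  finally have "(LINT x|lborel. h x) = K * (LINT x|lborel. h (dil \<nu> l x))" .
  moreover have "K > 0" using l K by simp
  ultimately show ?thesis using l by (simp add: K powr_minus field_simps)
qed

lemma integrable_supp:
  fixes g :: "real^'n::finite \<Rightarrow> real"
  assumes "compact S" "continuous_on S g" "\<And>x. g x \<noteq> 0 \<Longrightarrow> x \<in> S"
  shows "integrable lborel g"
proof -
  have "integrable lborel (\<lambda>x. indicator S x *\<^sub>R g x)"
    by (rule borel_integrable_compact) (use assms in auto)
  moreover have "(\<lambda>x. indicator S x *\<^sub>R g x) = g"
    using assms(3) by (auto simp: fun_eq_iff indicator_def)
  ultimately show ?thesis by simp
qed

lemma cbox_lint: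
  fixes g :: "real^'n::finite \<Rightarrow> real"
  assumes c: "continuous_on UNIV g" and s: "\<And>x. g x \<noteq> 0 \<Longrightarrow> x \<in> cbox a b"
  shows "integrable lborel g" "integral (cbox a b) g = (LINT x|lborel. g x)"
proof -
  show i: "integrable lborel g"
    by (rule integrable_supp[OF compact_cbox continuous_on_subset[OF c] s]) auto
  have "(g has_integral (LINT x|lborel. g x)) UNIV" by (rule has_integral_integral_real[OF i])
  moreover have "(\<lambda>x. if x \<in> cbox a b then g x else 0) = g" using s by (auto simp: fun_eq_iff)
  ultimately have "(g has_integral (LINT x|lborel. g x)) (cbox a b)"
    using has_integral_restrict_UNIV[of "cbox a b" g "LINT x|lborel. g x"] by simp
  then show "integral (cbox a b) g = (LINT x|lborel. g x)" by (rule integral_unique)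
qed


lemma ID:
  fixes N :: "real^'n::finite \<Rightarrow> real" and u Du :: "real^'n \<Rightarrow> real" and S :: "(real^'n) set" and t :: real
  assumes Ncont: "continuous_on UNIV N" and Nnn: "\<And>x. N x \<ge> 0" and Npos: "\<And>x. x \<noteq> 0 \<Longrightarrow> N x > 0"
    and Nhom: "\<And>l x. l > 0 \<Longrightarrow> N (dil \<nu> l x) = l * N x"
    and uc: "continuous_on UNIV u" and Duc: "continuous_on UNIV Du"
    and S: "compact S" "0 \<notin> S" and uS: "\<And>x. u x \<noteq> 0 \<Longrightarrow> x \<in> S" and DuS: "\<And>x. Du x \<noteq> 0 \<Longrightarrow> x \<in> S"
    and ud: "\<And>y l. l > 0 \<Longrightarrow> ((\<lambda>l. u (dil \<nu> l y)) has_real_derivative Du (dil \<nu> l y) / l) (at l)"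
  shows "(LINT x|lborel. Du x * N x powr t) = - (hom_dim \<nu> + t) * (LINT x|lborel. u x * N x powr t)"
proof (cases "S = {}")
  case True
  then have "u = (\<lambda>_. 0)" "Du = (\<lambda>_. 0)" using uS DuS by auto
  then show ?thesis by simp
next
  case False
  obtain x0 where x0: "x0 \<in> S" "\<And>y. y \<in> S \<Longrightarrow> N x0 \<le> N y"
    using continuous_attains_inf[OF S(1) False continuous_on_subset[OF Ncont]] by auto
  define \<rho> where "\<rho> = N x0"
  have "x0 \<noteq> 0" using x0 S(2) by auto
  then have \<rho>: "\<rho> > 0" using Npos by (auto simp: \<rho>_def)
  have \<rho>S: "\<And>y. y \<in> S \<Longrightarrow> \<rho> \<le> N y" using x0 by (simp add: \<rho>_def)
  define U where "U = {1/2..2::real}"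
  have U: "convex U" "1 \<in> U" "\<And>l. l \<in> U \<Longrightarrow> l > 0" by (auto simp: U_def)
  have contdil: "continuous_on A (\<lambda>z. dil \<nu> (g z) (h z))" if "continuous_on A g" "continuous_on A h" "\<And>z. z \<in> A \<Longrightarrow> g z > 0"
    for A :: "'a::topological_space set" and g h
    unfolding dil_def using that by (intro continuous_intros) force+
  define K where "K = (\<lambda>z. dil \<nu> (1 / fst z) (snd z)) ` (U \<times> S)"
  have "compact K" unfolding K_def
    by (intro compact_continuous_image contdil compact_Times S(1)) (auto simp: U_def intro!: continuous_intros compact_Icc)
  then obtain a where Ka: "K \<subseteq> cbox (-a) a" using bounded_subset_cbox_symmetric compact_imp_bounded by metis
  define cb where "cb = cbox (-a) a"
  have supp: "x \<in> cb \<and> \<rho> / 2 \<le> N x" if l: "l \<in> U" and xs: "dil \<nu> l x \<in> S" for l x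
  proof
    have lp: "l > 0" using U l by auto
    have "x = dil \<nu> (1 / l) (dil \<nu> l x)" using lp by (simp add: dil_dil)
    then have "x \<in> K" unfolding K_def using l xs by (auto intro!: image_eqI[of _ _ "(l, dil \<nu> l x)"])
    then show "x \<in> cb" using Ka by (auto simp: cb_def)
    have "\<rho> \<le> l * N x" using \<rho>S[OF xs] Nhom[OF lp] by simp
    moreover have "l \<le> 2" using l by (simp add: U_def)
    moreover have "N x \<ge> 0" using Nnn[of x] .
    ultimately have "l * N x \<le> 2 * N x" by (intro mult_right_mono) auto
    then show "\<rho> / 2 \<le> N x" using \<open>\<rho> \<le> l * N x\<close> by linarith
  qed
  define \<psi> where "\<psi> x = (max (N x) (\<rho> / 2)) powr t" for x
  have \<psi>c: "continuous_on UNIV \<psi>" unfolding \<psi>_def[abs_def] using \<rho>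
    by (intro continuous_intros Ncont) (auto simp: max_def)
  have \<psi>eq: "\<psi> x = N x powr t" if "\<rho> / 2 \<le> N x" for x using that by (simp add: \<psi>_def max_absorb1)
  define J where "J = (LINT x|lborel. u x * N x powr t)"
  define \<Phi> where "\<Phi> l = integral cb (\<lambda>x. u (dil \<nu> l x) * \<psi> x)" for l
  have ucomp: "continuous_on UNIV (\<lambda>x. u (dil \<nu> l x))" if "l > 0" for l
    by (rule continuous_on_compose2[OF uc, of _ "\<lambda>x. dil \<nu> l x"]) (use that in \<open>auto intro!: contdil continuous_intros\<close>)
  have int_eq: "(\<lambda>x. u (dil \<nu> l x) * N x powr t) = (\<lambda>x. u (dil \<nu> l x) * \<psi> x)" if l: "l \<in> U" for l
  proof
    fix x show "u (dil \<nu> l x) * N x powr t = u (dil \<nu> l x) * \<psi> x"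
      using supp[OF l, of x] uS[of "dil \<nu> l x"] \<psi>eq[of x] by (cases "u (dil \<nu> l x) = 0") auto
  qed
  have \<Phi>eq: "\<Phi> l = l powr (- (hom_dim \<nu> + t)) * J" if l: "l \<in> U" for l
  proof -
    have lp: "l > 0" using U l by auto
    have "\<Phi> l = (LINT x|lborel. u (dil \<nu> l x) * \<psi> x)"
      unfolding \<Phi>_def cb_def
      by (rule cbox_lint(2)) (use supp[OF l] uS ucomp[OF lp] \<psi>c in \<open>auto simp: cb_def intro!: continuous_intros\<close>)
    also have "\<dots> = (LINT x|lborel. u (dil \<nu> l x) * N x powr t)" using int_eq[OF l] by simp
    also have "\<dots> = (LINT x|lborel. (\<lambda>y. u y * N (dil \<nu> (1 / l) y) powr t) (dil \<nu> l x))"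
      using lp by (simp add: dil_dil)
    also have "\<dots> = l powr (- hom_dim \<nu>) * (LINT y|lborel. u y * N (dil \<nu> (1 / l) y) powr t)"
    proof (rule lborel_dil[OF lp])
      have [measurable]: "u \<in> borel_measurable borel" "N \<in> borel_measurable borel"
        using uc Ncont by (auto intro: borel_measurable_continuous_onI)
      have [measurable]: "dil \<nu> (1 / l) \<in> borel_measurable borel"
        by (rule borel_measurable_continuous_onI) (unfold dil_def, intro continuous_intros)
      show "(\<lambda>y. u y * N (dil \<nu> (1 / l) y) powr t) \<in> borel_measurable borel" by measurable
    qed
    also have "\<dots> = l powr (- hom_dim \<nu>) * (LINT y|lborel. (1 / l) powr t * (u y * N y powr t))"
    proof -
      have eq: "u y * N (dil \<nu> (1 / l) y) powr t = (1 / l) powr t * (u y * N y powr t)" for y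
      proof -
        have "N (dil \<nu> (1 / l) y) = 1 / l * N y" using lp Nhom[of "1 / l" y] by simp
        then have "N (dil \<nu> (1 / l) y) powr t = (1 / l) powr t * N y powr t" by (simp only: powr_mult)
        then show ?thesis by simp
      qed
      show ?thesis by (simp only: eq)
    qed
    also have "\<dots> = l powr (- hom_dim \<nu>) * ((1 / l) powr t * J)"
      by (simp add: J_def)
    also have "\<dots> = l powr (- (hom_dim \<nu> + t)) * J"
    proof -
      have "(1 / l) powr t = l powr (- t)" using lp by (simp add: powr_minus divide_inverse inverse_powr)
      moreover have "l powr (- (hom_dim \<nu> + t)) = l powr (- hom_dim \<nu>) * l powr (- t)"
        by (simp add: powr_add[symmetric])
      ultimately show ?thesis by simp
    qed
    finally show ?thesis .
  qed
  have d\<Phi>: "(\<Phi> has_field_derivative integral cb (\<lambda>x. Du (dil \<nu> 1 x) / 1 * \<psi> x)) (at 1 within U)"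
    unfolding \<Phi>_def cb_def
  proof (rule leibniz_rule_field_derivative[where fx="\<lambda>l x. Du (dil \<nu> l x) / l * \<psi> x" and f="\<lambda>l x. u (dil \<nu> l x) * \<psi> x", OF _ _ _ U(2) U(1)])
    fix l x assume l: "l \<in> U" and "x \<in> cbox (-a) a"
    have "((\<lambda>l. u (dil \<nu> l x) * \<psi> x) has_field_derivative Du (dil \<nu> l x) / l * \<psi> x) (at l)"
      using ud[of l x] U(3)[OF l] by (auto intro!: derivative_eq_intros)
    then show "((\<lambda>l. u (dil \<nu> l x) * \<psi> x) has_field_derivative Du (dil \<nu> l x) / l * \<psi> x) (at l within U)"
      by (rule has_field_derivative_at_within)
  next
    fix l assume l: "l \<in> U"
    show "(\<lambda>x. u (dil \<nu> l x) * \<psi> x) integrable_on cbox (- a) a"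
      by (rule integrable_continuous) (use ucomp[of l] U(3)[OF l] \<psi>c in \<open>auto intro!: continuous_intros intro: continuous_on_subset\<close>)
  next
    have c1: "continuous_on (U \<times> cbox (- a) a) (\<lambda>z. Du (dil \<nu> (fst z) (snd z)))"
      by (rule continuous_on_compose2[OF Duc, of _ "\<lambda>z. dil \<nu> (fst z) (snd z)"]) (use U(3) in \<open>auto intro!: contdil continuous_intros\<close>)
    have "continuous_on (U \<times> cbox (- a) a) (\<lambda>z. Du (dil \<nu> (fst z) (snd z)) / fst z * \<psi> (snd z))"
      using U(3) by (intro continuous_intros c1 continuous_on_compose2[OF \<psi>c]) auto
    then show "continuous_on (U \<times> cbox (- a) a) (\<lambda>(l, x). Du (dil \<nu> l x) / l * \<psi> x)"
      by (simp add: case_prod_beta')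
  qed
  have i1: "integral cb (\<lambda>x. Du (dil \<nu> 1 x) / 1 * \<psi> x) = (LINT x|lborel. Du x * N x powr t)"
  proof -
    have "integral cb (\<lambda>x. Du (dil \<nu> 1 x) / 1 * \<psi> x) = integral cb (\<lambda>x. Du x * \<psi> x)" by simp
    also have "\<dots> = (LINT x|lborel. Du x * \<psi> x)"
      unfolding cb_def
      by (rule cbox_lint(2)) (use supp[OF U(2)] DuS Duc \<psi>c in \<open>auto simp: cb_def intro!: continuous_intros\<close>)
    also have "\<dots> = (LINT x|lborel. Du x * N x powr t)"
    proof (rule Bochner_Integration.integral_cong)
      fix x show "Du x * \<psi> x = Du x * N x powr t"
      proof (cases "Du x = 0")
        case False
        then have "\<rho> / 2 \<le> N x" using supp[OF U(2), of x] DuS[of x] by simp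
        then show ?thesis by (simp add: \<psi>eq)
      qed simp
    qed simp
    finally show ?thesis .
  qed
  have int1: "1 \<in> interior U" by (simp add: U_def)
  have d1: "(\<Phi> has_field_derivative (LINT x|lborel. Du x * N x powr t)) (at 1)"
    using d\<Phi> i1 at_within_interior[OF int1] by simp
  have d2: "((\<lambda>l. l powr (- (hom_dim \<nu> + t)) * J) has_field_derivative (- (hom_dim \<nu> + t)) * J) (at 1)"
    by (auto intro!: derivative_eq_intros)
  have d2': "(\<Phi> has_field_derivative (- (hom_dim \<nu> + t)) * J) (at 1)"
    by (rule has_field_derivative_transform_within_open[OF d2, of "{1/2<..<2}"]) (auto simp: \<Phi>eq U_def)
  show ?thesis using DERIV_unique[OF d1 d2'] by (simp add: J_def)
qed

lemma holder:
  fixes F G :: "'a \<Rightarrow> real" and p q :: real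
  assumes pq: "p > 1" "q > 1" "1/p + 1/q = 1"
    and nnF: "\<And>x. F x \<ge> 0" and nnG: "\<And>x. G x \<ge> 0"
    and iF: "integrable M (\<lambda>x. F x powr p)" and iG: "integrable M (\<lambda>x. G x powr q)"
    and iFG: "integrable M (\<lambda>x. F x * G x)"
  shows "(\<integral>x. F x * G x \<partial>M) \<le> (\<integral>x. F x powr p \<partial>M) powr (1/p) * (\<integral>x. G x powr q \<partial>M) powr (1/q)"
proof -
  define a where "a = (\<integral>x. F x powr p \<partial>M)"
  define b where "b = (\<integral>x. G x powr q \<partial>M)"
  have a0: "a \<ge> 0" "b \<ge> 0" unfolding a_def b_def by (auto intro!: integral_nonneg_AE)
  have zero: "(\<integral>x. F x * G x \<partial>M) = 0" if "AE x in M. F x * G x = 0"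
  proof -
    have "(\<integral>x. F x * G x \<partial>M) = (\<integral>x. 0 \<partial>M)"
      by (rule integral_cong_AE) (use iFG that in auto)
    then show ?thesis by simp
  qed
  show ?thesis
  proof (cases "a = 0 \<or> b = 0")
    case True
    then have "AE x in M. F x * G x = 0"
    proof
      assume "a = 0"
      then have "AE x in M. F x powr p = 0"
        using integral_nonneg_eq_0_iff_AE[OF iF] unfolding a_def by auto
      then show ?thesis by eventually_elim simp
    next
      assume "b = 0"
      then have "AE x in M. G x powr q = 0"
        using integral_nonneg_eq_0_iff_AE[OF iG] unfolding b_def by auto
      then show ?thesis by eventually_elim simp
    qed
    then show ?thesis using zero by (simp add: a_def[symmetric] b_def[symmetric])
  next
    case False
    then have ab: "a > 0" "b > 0" using a0 by auto
    define A where "A = a powr (1/p)"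
    define B where "B = b powr (1/q)"
    have AB: "A > 0" "B > 0" using ab by (auto simp: A_def B_def)
    have Ap: "A powr p = a" using ab pq by (simp add: A_def powr_powr)
    have Bq: "B powr q = b" using ab pq by (simp add: B_def powr_powr)
    have pw: "F x * G x / (A * B) \<le> F x powr p / (p * a) + G x powr q / (q * b)" for x
    proof -
      have "(F x / A) * (G x / B) \<le> (F x / A) powr p / p + (G x / B) powr q / q"
        by (rule Youngs_inequality) (use pq nnF nnG AB in auto)
      then show ?thesis using Ap Bq by (simp add: powr_divide mult.commute)
    qed
    have "(\<integral>x. F x * G x / (A * B) \<partial>M) \<le> (\<integral>x. F x powr p / (p * a) + G x powr q / (q * b) \<partial>M)"
      by (rule integral_mono) (use iF iG iFG pw in auto)
    also have "\<dots> = a / (p * a) + b / (q * b)"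
      using iF iG by (simp add: a_def b_def)
    also have "\<dots> = 1" using ab pq by simp
    finally have "(\<integral>x. F x * G x \<partial>M) / (A * B) \<le> 1" by simp
    then show ?thesis using AB by (simp add: A_def B_def a_def b_def divide_le_eq)
  qed
qed

lemma dphi_scale: "dphi p (s * y) = \<bar>s\<bar> powr (p - 1) * sgn s * dphi p y"
  by (simp add: dphi_def abs_mult powr_mult sgn_mult algebra_simps)

lemma dphi_self: "dphi p y * y = p * \<bar>y\<bar> powr p"
proof (cases "y = 0")
  case False
  have "sgn y * y = \<bar>y\<bar>" by (simp add: sgn_if abs_if)
  moreover have "\<bar>y\<bar> powr p = \<bar>y\<bar> * \<bar>y\<bar> powr (p - 1)" using powr_m1[of "\<bar>y\<bar>" p] False by simp
  ultimately show ?thesis unfolding dphi_def by (simp add: algebra_simps)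
qed (simp add: dphi_def)

lemma abs_dphi: "p \<ge> 0 \<Longrightarrow> \<bar>dphi p y\<bar> = p * \<bar>y\<bar> powr (p - 1)"
  by (cases "y = 0") (auto simp: dphi_def abs_mult)

theorem theorem3p1:
  fixes gmul :: "real^'n::finite \<Rightarrow> real^'n \<Rightarrow> real^'n"
    and ginv :: "real^'n \<Rightarrow> real^'n"
    and \<nu> :: "'n \<Rightarrow> real"
    and N :: "real^'n \<Rightarrow> real"
    and f :: "real^'n \<Rightarrow> real"
    and p \<alpha> b :: real
  assumes G: "homogeneous_group gmul ginv \<nu>"
    and Q3: "hom_dim \<nu> \<ge> 3"
    and qn: "homogeneous_quasi_norm ginv \<nu> N"
    and p: "2 \<le> p" "p < hom_dim \<nu>"
    and \<alpha>: "\<alpha> < (hom_dim \<nu> - p) / p"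
    and f: "f \<in> C0_infinity_punctured"
  shows "(\<integral>x. \<bar>radial_deriv \<nu> N f x\<bar> powr p / N x powr (\<alpha> * p) \<partial>lborel)
           - ((hom_dim \<nu> - p - \<alpha> * p) / p) powr p
             * (\<integral>x. \<bar>f x\<bar> powr p / N x powr ((\<alpha> + 1) * p) \<partial>lborel)
         \<ge> c_const p * \<bar>(hom_dim \<nu> * (p - 1) - p * b) / p\<^sup>2\<bar> powr p
           * (\<integral>x. \<bar>f x\<bar> powr p * N x powr (hom_dim \<nu> - p - \<alpha> * p - (hom_dim \<nu> + p * b) / p) \<partial>lborel) powr p
           / (\<integral>x. \<bar>f x\<bar> powr p * N x powr (hom_dim \<nu> - p - \<alpha> * p - b * p / (p - 1)) \<partial>lborel) powr (p - 1)"
proof -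
  define Q where "Q = hom_dim \<nu>"
  from qn have Ncont: "continuous_on UNIV N" and Nnn: "\<And>x. N x \<ge> 0" and N0: "\<And>x. N x = 0 \<longleftrightarrow> x = 0"
    and Nhom: "\<And>l x. l > 0 \<Longrightarrow> N (dil \<nu> l x) = l * N x"
    unfolding homogeneous_quasi_norm_def by auto
  have Npos: "\<And>x. x \<noteq> 0 \<Longrightarrow> N x > 0" using Nnn N0 by (metis less_eq_real_def)
  have N00: "N 0 = 0" using N0 by simp
  define S where "S = closure {x. f x \<noteq> 0}"
  note CP = C0_props[OF f, folded S_def]
  have cS: "compact S" and S0: "0 \<notin> S" and fz: "\<And>x. x \<notin> S \<Longrightarrow> f x = 0" and fc: "continuous_on UNIV f"
    using CP by auto
  define d where "d i x = dpart (axis i 1) f x" for i x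
  have dc: "\<And>i. continuous_on UNIV (d i)" using CP(5) by (simp add: d_def[abs_def])
  have line: "\<And>x i. ((\<lambda>t. f (x + t *\<^sub>R axis i 1)) has_real_derivative d i x) (at 0)"
    using CP(6) by (simp add: d_def)
  have dz: "\<And>x i. x \<notin> S \<Longrightarrow> d i x = 0" using CP(7) by (simp add: d_def)
  have fd: "\<And>x. (f has_derivative (\<lambda>h. \<Sum>i\<in>UNIV. h $ i * d i x)) (at x)"
    by (rule frechet_partials[OF line dc])
  define Df where "Df = Eul \<nu> d"
  have Dfc: "continuous_on UNIV Df" unfolding Df_def Eul_def[abs_def] by (intro continuous_intros dc)
  have DfS: "\<And>x. x \<notin> S \<Longrightarrow> Df x = 0" by (simp add: Df_def Eul_def dz)
  have F1f: "\<And>y l. l > 0 \<Longrightarrow> ((\<lambda>l. f (dil \<nu> l y)) has_real_derivative Df (dil \<nu> l y) / l) (at l)"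
    using F1[OF fd] by (simp add: Df_def)
  have rad: "\<And>x. x \<noteq> 0 \<Longrightarrow> radial_deriv \<nu> N f x = Df x / N x"
    using radial_eq[OF fd Npos] by (simp add: Df_def)
  have p1: "p > 1" and p0: "p > 0" using p by auto
  define K where "K = (Q - p - \<alpha> * p) / p"
  have "\<alpha> * p < Q - p" using \<alpha> p0 by (simp add: Q_def pos_less_divide_eq)
  then have K: "K > 0" using p0 by (simp add: K_def)
  have Kp: "K * p = Q - p - \<alpha> * p" using p0 by (simp add: K_def)
  define u where "u x = \<bar>f x\<bar> powr p" for x
  define Du where "Du x = dphi p (f x) * Df x" for x
  have uc: "continuous_on UNIV u" unfolding u_def[abs_def] using p0
    by (intro continuous_on_powr' continuous_intros fc) auto
  have Duc: "continuous_on UNIV Du" unfolding Du_def[abs_def]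
    by (intro continuous_intros Dfc continuous_on_compose2[OF dphi_cont[OF p1] fc]) auto
  have uS: "\<And>x. u x \<noteq> 0 \<Longrightarrow> x \<in> S" using fz by (auto simp: u_def)
  have DuS: "\<And>x. Du x \<noteq> 0 \<Longrightarrow> x \<in> S" using fz by (auto simp: Du_def dphi_def)
  have ud: "((\<lambda>l. u (dil \<nu> l y)) has_real_derivative Du (dil \<nu> l y) / l) (at l)" if "l > 0" for y l
    using DERIV_chain2[OF dphi_deriv[OF p1] F1f[OF that]] by (simp add: u_def Du_def)
  note IDf = ID[OF Ncont Nnn Npos Nhom uc Duc cS S0 uS DuS ud, folded Q_def]
  have DuS': "\<And>x. x \<notin> S \<Longrightarrow> Du x = 0" and uS': "\<And>x. x \<notin> S \<Longrightarrow> u x = 0" using DuS uS by blast+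
  have NS: "\<And>x. x \<in> S \<Longrightarrow> N x > 0" using S0 Npos by (metis)
  have cN: "continuous_on S N" using Ncont by (rule continuous_on_subset) auto
  have cfS: "continuous_on S f" using fc by (rule continuous_on_subset) auto
  have cDfS: "continuous_on S Df" using Dfc by (rule continuous_on_subset) auto
  have cDuS: "continuous_on S Du" using Duc by (rule continuous_on_subset) auto
  have cuS: "continuous_on S u" using uc by (rule continuous_on_subset) auto
  have intS: "integrable lborel g" if "continuous_on S g" "\<And>x. x \<notin> S \<Longrightarrow> g x = 0" for g :: "real^'n \<Rightarrow> real"
    by (rule integrable_supp[OF cS that(1)]) (use that(2) in blast)
  define t1 where "t1 = - ((\<alpha> + 1) * p)"
  define \<delta>1 where "\<delta>1 = Q - p - \<alpha> * p - (Q + p * b) / p"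
  define \<delta>2 where "\<delta>2 = Q - p - \<alpha> * p - b * p / (p - 1)"
  define c where "c = c_const p"
  have c0: "c \<ge> 0" using c_nonneg[of p] p by (simp add: c_def)
  define W where "W x = Df x / N x + K * f x / N x" for x
  define E1 where "E1 x = \<bar>Df x / N x\<bar> powr p / N x powr (\<alpha> * p)" for x
  define E2 where "E2 x = \<bar>f x\<bar> powr p / N x powr ((\<alpha> + 1) * p)" for x
  define Ai where "Ai x = \<bar>W x\<bar> powr p / N x powr (\<alpha> * p)" for x
  define M1 where "M1 x = Du x * N x powr t1" for x
  define M2 where "M2 x = u x * N x powr t1" for x
  define E3 where "E3 x = u x * N x powr \<delta>1" for x
  define E4 where "E4 x = u x * N x powr \<delta>2" for x
  define M3 where "M3 x = Du x * N x powr \<delta>1" for x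
  have iE1: "integrable lborel E1" unfolding E1_def using NS p0
    by (intro intS continuous_intros continuous_on_powr' cN cfS cDfS) (auto simp: fz DfS dest: NS)
  have iE2: "integrable lborel E2" unfolding E2_def using NS p0
    by (intro intS continuous_intros continuous_on_powr' cN cfS cDfS) (auto simp: fz DfS dest: NS)
  have iAi: "integrable lborel Ai" unfolding Ai_def W_def using NS p0
    by (intro intS continuous_intros continuous_on_powr' cN cfS cDfS) (auto simp: fz DfS dest: NS)
  have iM1: "integrable lborel M1" unfolding M1_def using NS p0
    by (intro intS continuous_intros continuous_on_powr' cN cDuS) (auto simp: DuS' dest: NS)
  have iM2: "integrable lborel M2" unfolding M2_def using NS p0
    by (intro intS continuous_intros continuous_on_powr' cN cuS) (auto simp: uS' dest: NS)
  have iM3: "integrable lborel M3" unfolding M3_def using NS p0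
    by (intro intS continuous_intros continuous_on_powr' cN cDuS) (auto simp: DuS' dest: NS)
  have iE3: "integrable lborel E3" unfolding E3_def using NS p0
    by (intro intS continuous_intros continuous_on_powr' cN cuS) (auto simp: uS' dest: NS)
  have iE4: "integrable lborel E4" unfolding E4_def using NS p0
    by (intro intS continuous_intros continuous_on_powr' cN cuS) (auto simp: uS' dest: NS)
  have PW: "K powr p * E2 x - K powr (p - 1) * (M1 x + K * p * M2 x) + c * Ai x \<le> E1 x" for x
  proof (cases "x = 0")
    case True then show ?thesis by (simp add: E1_def E2_def M1_def M2_def Ai_def N00 t1_def)
  next
    case False
    define r where "r = N x"
    have r: "r > 0" using Npos[OF False] by (simp add: r_def)
    define R where "R = r powr (\<alpha> * p)"
    have R: "R > 0" using r by (simp add: R_def)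
    define a where "a = - (K / r) * f x"
    define bb where "bb = W x"
    have ab: "a + bb = Df x / r" using r by (simp add: a_def bb_def W_def r_def field_simps)
    have sc: "\<bar>a\<bar> powr p + dphi p a * bb + c * \<bar>bb\<bar> powr p \<le> \<bar>a + bb\<bar> powr p"
      using SC[OF p(1)] by (simp add: c_def)
    have rpa: "r powr ((\<alpha> + 1) * p) = r powr p * R"
      by (simp add: R_def powr_add[symmetric] algebra_simps)
    have eA: "\<bar>a\<bar> powr p / R = K powr p * E2 x"
    proof -
      have "\<bar>a\<bar> = K / r * \<bar>f x\<bar>" using K r by (simp add: a_def abs_mult)
      then have A: "\<bar>a\<bar> powr p = K powr p / r powr p * \<bar>f x\<bar> powr p" by (simp add: powr_mult powr_divide)
      have E: "E2 x = \<bar>f x\<bar> powr p / (r powr p * R)" by (simp only: E2_def r_def[symmetric] rpa)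
      show ?thesis unfolding A E using r R by simp
    qed
    have eB: "dphi p a * bb / R = - (K powr (p - 1)) * (M1 x + K * p * M2 x)"
    proof -
      have da: "dphi p a = - (K powr (p - 1) / r powr (p - 1)) * dphi p (f x)"
        using K r unfolding a_def dphi_scale by (simp add: powr_divide)
      have bb: "bb = (Df x + K * f x) / r" using r by (simp add: bb_def W_def r_def add_divide_distrib)
      have m: "M1 x + K * p * M2 x = dphi p (f x) * (Df x + K * f x) * r powr t1"
        using dphi_self[of p "f x"] by (simp add: M1_def M2_def Du_def u_def r_def algebra_simps)
      have rp: "r powr p = r powr (p - 1) * r" using powr_m1[OF r, of p] by simp
      have rt: "r powr t1 = 1 / (r powr (p - 1) * r * R)"
        using r by (simp add: t1_def powr_minus_divide rpa rp)
      show ?thesis using r R unfolding da bb m rt by (simp add: field_simps)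
    qed
    have eC: "c * \<bar>bb\<bar> powr p / R = c * Ai x" by (simp add: Ai_def bb_def R_def r_def)
    have E1x: "E1 x = \<bar>a + bb\<bar> powr p / R" by (simp add: E1_def ab R_def r_def)
    have "(\<bar>a\<bar> powr p + dphi p a * bb + c * \<bar>bb\<bar> powr p) / R \<le> \<bar>a + bb\<bar> powr p / R"
      using sc R by (intro divide_right_mono) auto
    then show ?thesis unfolding E1x using eA eB eC by (simp add: add_divide_distrib)
  qed
  have "(\<integral>x. K powr p * E2 x - K powr (p - 1) * (M1 x + K * p * M2 x) + c * Ai x \<partial>lborel) \<le> (\<integral>x. E1 x \<partial>lborel)"
    by (rule integral_mono) (use iE1 iE2 iM1 iM2 iAi PW in auto)
  also have "(\<integral>x. K powr p * E2 x - K powr (p - 1) * (M1 x + K * p * M2 x) + c * Ai x \<partial>lborel)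
      = K powr p * (\<integral>x. E2 x \<partial>lborel) - K powr (p - 1) * ((\<integral>x. M1 x \<partial>lborel) + K * p * (\<integral>x. M2 x \<partial>lborel)) + c * (\<integral>x. Ai x \<partial>lborel)"
    using iE1 iE2 iM1 iM2 iAi by simp
  also have "(\<integral>x. M1 x \<partial>lborel) = - (K * p) * (\<integral>x. M2 x \<partial>lborel)"
    using IDf[of t1] by (simp add: M1_def M2_def t1_def Kp algebra_simps)
  finally have stepA: "K powr p * (\<integral>x. E2 x \<partial>lborel) + c * (\<integral>x. Ai x \<partial>lborel) \<le> (\<integral>x. E1 x \<partial>lborel)"
    by (simp add: algebra_simps)
  define m where "m = (Q * (p - 1) - p * b) / p"
  define V where "V x = dphi p (f x) * (Df x + K * f x) * N x powr \<delta>1" for x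
  define Fh where "Fh x = \<bar>W x\<bar> * N x powr (- \<alpha>)" for x
  define Gh where "Gh x = \<bar>f x\<bar> powr (p - 1) * N x powr (\<delta>1 + 1 + \<alpha>)" for x
  have Veq: "V x = M3 x + K * p * E3 x" for x
    using dphi_self[of p "f x"] by (simp add: V_def M3_def E3_def Du_def u_def algebra_simps)
  have iV: "integrable lborel V" unfolding Veq[abs_def] using iM3 iE3 by simp
  have f0: "f 0 = 0" using fz S0 by simp
  have absV: "\<bar>V x\<bar> = p * (Fh x * Gh x)" for x
  proof (cases "x = 0")
    case True then show ?thesis by (simp add: V_def Fh_def Gh_def f0 dphi_def N00)
  next
    case False
    define r where "r = N x"
    have r: "r > 0" using Npos[OF False] by (simp add: r_def)
    have w: "\<bar>Df x + K * f x\<bar> = r * \<bar>W x\<bar>"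
      using r by (simp add: W_def r_def[symmetric] add_divide_distrib[symmetric] abs_divide)
    have rr: "r powr (- \<alpha>) * r powr (\<delta>1 + 1 + \<alpha>) = r * r powr \<delta>1"
      using r by (simp add: powr_add[symmetric]) (simp add: powr_add)
    have "\<bar>V x\<bar> = p * \<bar>f x\<bar> powr (p - 1) * (r * \<bar>W x\<bar>) * r powr \<delta>1"
      using p0 by (simp add: V_def abs_mult abs_dphi w r_def[symmetric])
    also have "\<dots> = p * (\<bar>W x\<bar> * r powr (- \<alpha>) * (\<bar>f x\<bar> powr (p - 1) * r powr (\<delta>1 + 1 + \<alpha>)))"
      by (simp add: rr[symmetric] algebra_simps)
    finally show ?thesis by (simp add: Fh_def Gh_def r_def)
  qed
  have iFG: "integrable lborel (\<lambda>x. Fh x * Gh x)" unfolding Fh_def Gh_def W_def using NS p0 p1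
    by (intro intS continuous_intros continuous_on_powr' cN cfS cDfS) (auto simp: fz DfS dest: NS)
  define I3 where "I3 = (\<integral>x. E3 x \<partial>lborel)"
  define I4 where "I4 = (\<integral>x. E4 x \<partial>lborel)"
  define A where "A = (\<integral>x. Ai x \<partial>lborel)"
  have IV: "(\<integral>x. V x \<partial>lborel) = - m * I3"
  proof -
    have "(\<integral>x. V x \<partial>lborel) = (\<integral>x. M3 x \<partial>lborel) + K * p * I3"
      unfolding Veq I3_def using iM3 iE3 by simp
    also have "(\<integral>x. M3 x \<partial>lborel) = - (Q + \<delta>1) * I3"
      using IDf[of \<delta>1] by (simp add: M3_def I3_def E3_def)
    finally have "(\<integral>x. V x \<partial>lborel) = (K * p - (Q + \<delta>1)) * I3" by (simp add: algebra_simps)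
    moreover have "K * p - (Q + \<delta>1) = - m"
      using p0 unfolding Kp \<delta>1_def m_def by (simp add: field_simps)
    ultimately show ?thesis by simp
  qed
  have "\<bar>m\<bar> * I3 \<le> p * (\<integral>x. Fh x * Gh x \<partial>lborel)"
  proof -
    have I3nn: "I3 \<ge> 0" unfolding I3_def E3_def u_def by (intro integral_nonneg_AE) auto
    have "\<bar>m\<bar> * I3 = \<bar>\<integral>x. V x \<partial>lborel\<bar>" using I3nn by (simp add: IV abs_mult)
    also have "\<dots> \<le> (\<integral>x. p * (Fh x * Gh x) \<partial>lborel)"
      by (rule integral_abs_bound_integral) (use iV iFG absV in auto)
    finally show ?thesis by simp
  qed
  moreover have "(\<integral>x. Fh x * Gh x \<partial>lborel) \<le> A powr (1/p) * I4 powr (1 / (p / (p - 1)))"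
  proof -
    define q where "q = p / (p - 1)"
    have q1: "q > 1" using p1 by (simp add: q_def)
    have pq: "1/p + 1/q = 1" using p1 by (simp add: q_def field_simps)
    have Fp: "Fh x powr p = Ai x" for x
    proof (cases "x = 0")
      case True then show ?thesis by (simp add: Fh_def Ai_def N00)
    next
      case False
      have r: "N x > 0" using Npos[OF False] .
      have "Fh x powr p = \<bar>W x\<bar> powr p * N x powr (- (\<alpha> * p))"
        by (simp add: Fh_def powr_mult powr_powr)
      then show ?thesis using r by (simp add: Ai_def powr_minus_divide)
    qed
    have Gq: "Gh x powr q = E4 x" for x
    proof (cases "x = 0")
      case True then show ?thesis by (simp add: Gh_def E4_def N00)
    next
      case False
      have e1: "(p - 1) * q = p" using p1 by (simp add: q_def)
      have e2: "(\<delta>1 + 1 + \<alpha>) * q = \<delta>2" using p1 unfolding q_def \<delta>1_def \<delta>2_def by (simp add: field_simps)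
      show ?thesis by (simp add: Gh_def E4_def u_def powr_mult powr_powr e1 e2)
    qed
    have H: "(\<integral>x. Fh x * Gh x \<partial>lborel) \<le> (\<integral>x. Fh x powr p \<partial>lborel) powr (1/p) * (\<integral>x. Gh x powr q \<partial>lborel) powr (1/q)"
    proof -
      have iF': "integrable lborel (\<lambda>x. Fh x powr p)" using iAi by (simp add: Fp)
      have iG': "integrable lborel (\<lambda>x. Gh x powr q)" using iE4 by (simp add: Gq)
      show ?thesis by (rule holder[OF p1 q1 pq _ _ iF' iG' iFG]) (auto simp: Fh_def Gh_def)
    qed
    from H[unfolded Fp Gq] show ?thesis by (simp add: A_def I4_def q_def)
  qed
  ultimately have key: "\<bar>m\<bar> * I3 \<le> p * (A powr (1/p) * I4 powr ((p - 1) / p))"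
  proof -
    assume h1: "\<bar>m\<bar> * I3 \<le> p * (\<integral>x. Fh x * Gh x \<partial>lborel)"
      and h2: "(\<integral>x. Fh x * Gh x \<partial>lborel) \<le> A powr (1/p) * I4 powr (1 / (p / (p - 1)))"
    have "p * (\<integral>x. Fh x * Gh x \<partial>lborel) \<le> p * (A powr (1/p) * I4 powr (1 / (p / (p - 1))))"
      using h2 p0 by (intro mult_left_mono) auto
    then show ?thesis using h1 by simp
  qed
  have A0: "A \<ge> 0" unfolding A_def Ai_def by (intro integral_nonneg_AE) auto
  have I30: "I3 \<ge> 0" unfolding I3_def E3_def u_def by (intro integral_nonneg_AE) auto
  have I40: "I4 \<ge> 0" unfolding I4_def E4_def u_def by (intro integral_nonneg_AE) auto
  have rhs: "c * ((\<bar>m\<bar> / p) powr p * I3 powr p / I4 powr (p - 1)) \<le> c * A"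
  proof (cases "I4 = 0")
    case True then show ?thesis using c0 A0 by simp
  next
    case False
    then have I4p: "I4 > 0" using I40 by simp
    have k1: "\<bar>m\<bar> / p * I3 \<le> A powr (1/p) * I4 powr ((p - 1) / p)"
      using key p0 by (simp add: divide_le_eq mult.commute mult.left_commute)
    have "(\<bar>m\<bar> / p * I3) powr p \<le> (A powr (1/p) * I4 powr ((p - 1) / p)) powr p"
      using k1 I30 p0 by (intro powr_mono2) auto
    also have "\<dots> = A * I4 powr (p - 1)"
      using A0 I40 p0 by (simp add: powr_mult powr_powr)
    finally have h: "(\<bar>m\<bar> / p * I3) powr p \<le> A * I4 powr (p - 1)" .
    have "(\<bar>m\<bar> / p * I3) powr p = (\<bar>m\<bar> / p) powr p * I3 powr p" by (rule powr_mult)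
    with h have "(\<bar>m\<bar> / p) powr p * I3 powr p \<le> A * I4 powr (p - 1)" by simp
    then have "(\<bar>m\<bar> / p) powr p * I3 powr p / I4 powr (p - 1) \<le> A"
      using I4p by (simp add: pos_divide_le_eq)
    then show ?thesis using c0 by (intro mult_left_mono) auto
  qed
  have main: "c * A \<le> (\<integral>x. E1 x \<partial>lborel) - K powr p * (\<integral>x. E2 x \<partial>lborel)"
    using stepA by (simp add: A_def)
  have E1eq: "(\<lambda>x. \<bar>radial_deriv \<nu> N f x\<bar> powr p / N x powr (\<alpha> * p)) = E1"
  proof
    fix x show "\<bar>radial_deriv \<nu> N f x\<bar> powr p / N x powr (\<alpha> * p) = E1 x"
      by (cases "x = 0") (simp_all add: E1_def N00 rad)
  qed
  have L: "(\<integral>x. \<bar>radial_deriv \<nu> N f x\<bar> powr p / N x powr (\<alpha> * p) \<partial>lborel)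
           - ((hom_dim \<nu> - p - \<alpha> * p) / p) powr p
             * (\<integral>x. \<bar>f x\<bar> powr p / N x powr ((\<alpha> + 1) * p) \<partial>lborel)
        = (\<integral>x. E1 x \<partial>lborel) - K powr p * (\<integral>x. E2 x \<partial>lborel)"
    unfolding E1eq by (simp add: K_def Q_def E2_def)
  have m2: "\<bar>(hom_dim \<nu> * (p - 1) - p * b) / p\<^sup>2\<bar> = \<bar>m\<bar> / p"
    using p0 by (simp add: m_def Q_def power2_eq_square abs_divide)
  have R: "c_const p * \<bar>(hom_dim \<nu> * (p - 1) - p * b) / p\<^sup>2\<bar> powr p
           * (\<integral>x. \<bar>f x\<bar> powr p * N x powr (hom_dim \<nu> - p - \<alpha> * p - (hom_dim \<nu> + p * b) / p) \<partial>lborel) powr p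
           / (\<integral>x. \<bar>f x\<bar> powr p * N x powr (hom_dim \<nu> - p - \<alpha> * p - b * p / (p - 1)) \<partial>lborel) powr (p - 1)
        = c * ((\<bar>m\<bar> / p) powr p * I3 powr p / I4 powr (p - 1))"
    unfolding m2 by (simp add: c_def I3_def I4_def E3_def E4_def u_def \<delta>1_def \<delta>2_def Q_def)
  show ?thesis unfolding L R using main rhs by linarith
qed

end
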